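(* Assume Hypothesis 1 (stated in the context). Then: 1. $X_{\max}=T_{C_{\max}}\rtimes X_{\mathbf 0}$; 2. $C_{\max}$ is $(X_{\max},2)$-neighbour-transitive and $\delta_{\max}\ge5$; 3. the kernel $K$ of the action of $X$ on $M$ equals the kernel of the action of $X_{\max}$ on $M$, namely $K=X\cap B=X_{\max}\cap B=T_{C_{\max}}$; 4. $C_{\max}$ is an $\mathbb F_2X_{\mathbf 0}$-module; 5. $|C|/|C_{\max}|=|X|/|X_{\max}|=|X^M|/|X_{\mathbf 0}^M|$.
   Context: $H(m,2)$: vertex set $\mathbb F_2^m$, coordinates indexed by a set $M$, $|M|=m$, adjacency when differing in exactly one coordinate; $d$ Hamming distance. For a code $C$: minimum distance $\delta$, covering radius $\rho=\max_\alpha d(\alpha,C)$, $C_i=\{\alpha:d(\alpha,C)=i\}$. $\mathrm{Aut}(H(m,2))=B\rtimes L$, $B\cong\mathbb Z_2^m$ the translations $t_\beta:\alpha\mapsto\alpha+\beta$, $L\cong\mathrm{Sym}(M)$ coordinate permutations; $\mathrm{Aut}(C)$ is the setwise stabiliser of $C$. For $X\le B\rtimes L$, $X^M$ is the permutation group induced on $M$ (image in $L$), $X_{\mathbf 0}$ the stabiliser of $\mathbf 0$. $C$ is $(X,s)$-neighbour-transitive if $X\le\mathrm{Aut}(C)$ is transitive on each of $C,C_1,\dots,C_s$; completely transitive if $\mathrm{Aut}(C)$ is transitive on each of $C,C_1,\dots,C_\rho$. For a linear code $D$, $T_D=\{t_\beta:\beta\in D\}$. For a code $C\ni\mathbf 0$,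 the maximal linear subcode $C_{\max}$ is the largest linear subcode $D\subseteq C$ with $T_D\le\mathrm{Aut}(C)$. Hypothesis 1: $C$ is a completely transitive code in $H(m,2)$ with $\mathbf 0\in C$ and minimum distance $\delta\ge5$; $X=\mathrm{Aut}(C)$; $C_{\max}$ is the maximal linear subcode of $C$ with minimum distance $\delta_{\max}$; $X_{\max}$ is the setwise stabiliser of $C_{\max}$ in $X$; and $2\le\dim C_{\max}\le m-2$. *)

theory Defs
  imports Complex_Main "HOL-Algebra.Coset"
begin

text \<open>Vertices of H(m,2): subsets of the coordinate set M = UNIV :: 'm set
  (a subset is identified with its characteristic vector in F_2^M);
  vector addition is symmetric difference, the zero vector is the empty set.\<close>

definition symdiff :: "'a set \<Rightarrow> 'a set \<Rightarrow> 'a set" where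
  "symdiff a b = (a - b) \<union> (b - a)"

definition hamming :: "'m set \<Rightarrow> 'm set \<Rightarrow> nat" where
  "hamming a b = card (symdiff a b)"

definition translation :: "'m set \<Rightarrow> 'm set \<Rightarrow> 'm set" where
  "translation \<beta> = (\<lambda>\<alpha>. symdiff \<alpha> \<beta>)"

definition coordperm :: "('m \<Rightarrow> 'm) \<Rightarrow> 'm set \<Rightarrow> 'm set" where
  "coordperm \<sigma> = (\<lambda>\<alpha>. \<sigma> ` \<alpha>)"

text \<open>Aut(H(m,2)) = B \<rtimes> L, as a set of maps on vertices, and as a group.\<close>
definition HAut :: "('m set \<Rightarrow> 'm set) set" where
  "HAut = {translation \<beta> \<circ> coordperm \<sigma> | \<beta> \<sigma>. bij \<sigma>}"

definition HAutG :: "('m set \<Rightarrow> 'm set) monoid" where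
  "HAutG = \<lparr>carrier = HAut, monoid.mult = (\<circ>), monoid.one = id\<rparr>"

definition Btrans :: "('m set \<Rightarrow> 'm set) set" where
  "Btrans = range translation"

definition perm_of :: "('m set \<Rightarrow> 'm set) \<Rightarrow> ('m \<Rightarrow> 'm)" where
  "perm_of g = (SOME \<sigma>. bij \<sigma> \<and> g = translation (g {}) \<circ> coordperm \<sigma>)"

definition induced_perm :: "('m set \<Rightarrow> 'm set) set \<Rightarrow> ('m \<Rightarrow> 'm) set" where
  "induced_perm X = perm_of ` X"

definition kernel_on_coords :: "('m set \<Rightarrow> 'm set) set \<Rightarrow> ('m set \<Rightarrow> 'm set) set" where
  "kernel_on_coords X = {g \<in> X. perm_of g = id}"

definition stab0 :: "('m set \<Rightarrow> 'm set) set \<Rightarrow> ('m set \<Rightarrow> 'm set) set" where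
  "stab0 X = {g \<in> X. g {} = {}}"

definition setwise_stab :: "('m set \<Rightarrow> 'm set) set \<Rightarrow> 'm set set \<Rightarrow> ('m set \<Rightarrow> 'm set) set" where
  "setwise_stab X D = {g \<in> X. g ` D = D}"

definition AutC :: "'m set set \<Rightarrow> ('m set \<Rightarrow> 'm set) set" where
  "AutC C = setwise_stab HAut C"

definition min_dist :: "'m set set \<Rightarrow> nat" where
  "min_dist C = Min {hamming a b | a b. a \<in> C \<and> b \<in> C \<and> a \<noteq> b}"

definition dist_code :: "'m set \<Rightarrow> 'm set set \<Rightarrow> nat" where
  "dist_code \<alpha> C = Min {hamming \<alpha> c | c. c \<in> C}"

definition covering_radius :: "'m set set \<Rightarrow> nat" where
  "covering_radius C = Max {dist_code \<alpha> C | \<alpha>. True}"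

definition code_layer :: "'m set set \<Rightarrow> nat \<Rightarrow> 'm set set" where
  "code_layer C i = {\<alpha>. dist_code \<alpha> C = i}"

definition transitive_on :: "('m set \<Rightarrow> 'm set) set \<Rightarrow> 'm set set \<Rightarrow> bool" where
  "transitive_on X S \<longleftrightarrow> (\<forall>a\<in>S. \<forall>b\<in>S. \<exists>g\<in>X. g a = b)"

definition neighbour_transitive ::
  "('m set \<Rightarrow> 'm set) set \<Rightarrow> 'm set set \<Rightarrow> nat \<Rightarrow> bool" where
  "neighbour_transitive X C s \<longleftrightarrow>
     subgroup X HAutG \<and> X \<subseteq> AutC C \<and> transitive_on X C \<and>
     (\<forall>i\<in>{1..s}. transitive_on X (code_layer C i))"

definition completely_transitive :: "'m set set \<Rightarrow> bool" where
  "completely_transitive C \<longleftrightarrow>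
     (\<forall>i\<le>covering_radius C. transitive_on (AutC C) (code_layer C i))"

definition linear_code :: "'m set set \<Rightarrow> bool" where
  "linear_code D \<longleftrightarrow> {} \<in> D \<and> (\<forall>a\<in>D. \<forall>b\<in>D. symdiff a b \<in> D)"

definition code_dim :: "'m set set \<Rightarrow> nat" where
  "code_dim D = (THE k. card D = 2 ^ k)"

definition transl_group :: "'m set set \<Rightarrow> ('m set \<Rightarrow> 'm set) set" where
  "transl_group D = translation ` D"

definition is_max_linear_subcode :: "'m set set \<Rightarrow> 'm set set \<Rightarrow> bool" where
  "is_max_linear_subcode C D \<longleftrightarrow>
     linear_code D \<and> D \<subseteq> C \<and> transl_group D \<subseteq> AutC C \<and>
     (\<forall>D'. linear_code D' \<and> D' \<subseteq> C \<and> transl_group D' \<subseteq> AutC C \<longrightarrow> D' \<subseteq> D)"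

definition internal_semidirect ::
  "('m set \<Rightarrow> 'm set) set \<Rightarrow> ('m set \<Rightarrow> 'm set) set \<Rightarrow> ('m set \<Rightarrow> 'm set) set \<Rightarrow> bool" where
  "internal_semidirect G N H \<longleftrightarrow>
     subgroup G HAutG \<and> normal N (HAutG\<lparr>carrier := G\<rparr>) \<and>
     subgroup H (HAutG\<lparr>carrier := G\<rparr>) \<and> N \<inter> H = {id} \<and>
     G = {n \<circ> h | n h. n \<in> N \<and> h \<in> H}"

definition F2_module :: "'m set set \<Rightarrow> ('m set \<Rightarrow> 'm set) set \<Rightarrow> bool" where
  "F2_module D Y \<longleftrightarrow> linear_code D \<and>
     (\<forall>g\<in>Y. g ` D = D \<and> (\<forall>a\<in>D. \<forall>b\<in>D. g (symdiff a b) = symdiff (g a) (g b)))"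

end

theory Submission
  imports Defs
begin


abbreviation finv :: "('a \<Rightarrow> 'b) \<Rightarrow> 'b \<Rightarrow> 'a" where "finv f \<equiv> inv_into UNIV f"

lemma symdiff_iff: "x \<in> symdiff a b \<longleftrightarrow> (x \<in> a) \<noteq> (x \<in> b)"
  by (auto simp: symdiff_def)

lemma symdiff_comm: "symdiff a b = symdiff b a" by (auto simp: symdiff_iff)
lemma symdiff_assoc: "symdiff (symdiff a b) c = symdiff a (symdiff b c)" by (auto simp: symdiff_iff)
lemma symdiff_self[simp]: "symdiff a a = {}" by (auto simp: symdiff_iff)
lemma symdiff_empty[simp]: "symdiff a {} = a" "symdiff {} a = a" by (auto simp: symdiff_iff)
lemma symdiff_cancel: "symdiff a b = symdiff c b \<longleftrightarrow> a = c" by (auto simp: symdiff_iff set_eq_iff)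
lemma symdiff_eq_empty: "symdiff a b = {} \<longleftrightarrow> a = b" by (auto simp: symdiff_iff set_eq_iff)

lemma translation_apply: "translation b x = symdiff x b" by (simp add: translation_def)
lemma coordperm_apply: "coordperm s x = s ` x" by (simp add: coordperm_def)

lemma image_symdiff: "inj s \<Longrightarrow> s ` symdiff a b = symdiff (s ` a) (s ` b)"
  unfolding symdiff_def by (simp add: image_Un image_set_diff)

lemma translation_comp: "translation a \<circ> translation b = translation (symdiff a b)"
  by (auto simp: fun_eq_iff translation_apply symdiff_iff)

lemma translation_invol[simp]: "translation a \<circ> translation a = id"
  by (auto simp: fun_eq_iff translation_apply symdiff_iff)

lemma translation_empty[simp]: "translation {} = id"
  by (simp add: translation_def fun_eq_iff)

lemma coordperm_comp: "coordperm s \<circ> coordperm t = coordperm (s \<circ> t)"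
  by (auto simp: fun_eq_iff coordperm_apply image_comp)

lemma coordperm_id[simp]: "coordperm id = id"
  by (auto simp: fun_eq_iff coordperm_apply)

lemma coordperm_translation: "inj s \<Longrightarrow> coordperm s \<circ> translation b = translation (s ` b) \<circ> coordperm s"
  by (simp add: fun_eq_iff coordperm_apply translation_apply image_symdiff)

lemma coordperm_inj: "coordperm s = coordperm t \<Longrightarrow> s = t"
proof
  fix x assume "coordperm s = coordperm t"
  then have "coordperm s {x} = coordperm t {x}" by simp
  then show "s x = t x" by (simp add: coordperm_apply)
qed

lemma translation_inj: "translation a = translation b \<Longrightarrow> a = b"
  by (metis symdiff_empty(2) translation_apply)

lemma HAutI: "bij s \<Longrightarrow> translation b \<circ> coordperm s \<in> HAut"
  unfolding HAut_def by blast

lemma HAutE: assumes "g \<in> HAut" obtains b s where "bij s" "g = translation b \<circ> coordperm s"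
  using assms unfolding HAut_def by blast

lemma zero_form'[simp]: "translation b (coordperm s {}) = b"
  by (simp add: translation_apply coordperm_apply)
lemma zero_form: "(translation b \<circ> coordperm s) {} = b"
  by (simp add: translation_apply coordperm_apply)

lemma perm_of_eq: assumes "bij s" "g = translation b \<circ> coordperm s" shows "perm_of g = s"
  unfolding perm_of_def
proof (rule some_equality)
  have "g {} = b" using assms(2) zero_form by simp
  then show "bij s \<and> g = translation (g {}) \<circ> coordperm s" using assms by simp
next
  fix t assume "bij t \<and> g = translation (g {}) \<circ> coordperm t"
  then have "translation b \<circ> coordperm t = translation b \<circ> coordperm s"
    using assms zero_form' by simp
  then have "translation b \<circ> (translation b \<circ> coordperm t) = translation b \<circ> (translation b \<circ> coordperm s)"
    by simp
  then have "coordperm t = coordperm s" by (metis comp_assoc translation_invol id_comp)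
  then show "t = s" by (rule coordperm_inj)
qed

lemma perm_of_HAut: assumes "g \<in> HAut"
  shows "bij (perm_of g)" "g = translation (g {}) \<circ> coordperm (perm_of g)"
proof -
  obtain b s where bs: "bij s" "g = translation b \<circ> coordperm s" using assms by (rule HAutE)
  then have "perm_of g = s" "g {} = b" using perm_of_eq zero_form' by auto
  then show "bij (perm_of g)" "g = translation (g {}) \<circ> coordperm (perm_of g)" using bs by auto
qed

lemma translation_HAut[simp]: "translation b \<in> HAut"
  using HAutI[of id b] by simp

lemma coordperm_HAut: "bij s \<Longrightarrow> coordperm s \<in> HAut"
  using HAutI[of s "{}"] by simp

lemma perm_of_translation[simp]: "perm_of (translation b) = id"
  by (rule perm_of_eq[of id]) auto

lemma perm_of_coordperm: "bij s \<Longrightarrow> perm_of (coordperm s) = s"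
  by (rule perm_of_eq[of s _ "{}"]) auto

lemma HAut_comp: assumes "g \<in> HAut" "h \<in> HAut"
  shows "g \<circ> h \<in> HAut" "perm_of (g \<circ> h) = perm_of g \<circ> perm_of h"
proof -
  obtain a s where as: "bij s" "g = translation a \<circ> coordperm s" using assms(1) by (rule HAutE)
  obtain b t where bt: "bij t" "h = translation b \<circ> coordperm t" using assms(2) by (rule HAutE)
  have inj: "inj s" using as bij_is_inj by auto
  have eq: "g \<circ> h = translation (symdiff a (s ` b)) \<circ> coordperm (s \<circ> t)"
    using as bt inj by (simp add: fun_eq_iff translation_apply coordperm_apply image_symdiff
        image_comp symdiff_assoc symdiff_comm)
  have st: "bij (s \<circ> t)" using as bt bij_comp by blast
  show "g \<circ> h \<in> HAut" using eq st HAutI by simp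
  have "perm_of g = s" "perm_of h = t" using as bt perm_of_eq by auto
  then show "perm_of (g \<circ> h) = perm_of g \<circ> perm_of h" using perm_of_eq[OF st eq] by simp
qed

lemma HAut_trivial: assumes "g \<in> HAut" "g {} = {}" "perm_of g = id" shows "g = id"
  using perm_of_HAut(2)[OF assms(1)] assms by simp

lemma HAut_inv: assumes "g \<in> HAut"
  shows "finv g \<in> HAut" "g \<circ> finv g = id" "finv g \<circ> g = id" "bij g"
proof -
  obtain a s where as: "bij s" "g = translation a \<circ> coordperm s" using assms by (rule HAutE)
  define h where "h = translation (finv s ` a) \<circ> coordperm (finv s)"
  have bi: "bij (finv s)" using as bij_imp_bij_inv by blast
  have hH: "h \<in> HAut" using h_def HAutI bi by simp
  have sinv: "s \<circ> finv s = id" "finv s \<circ> s = id"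
    using as(1) bij_is_surj[THEN surj_iff[THEN iffD1]] bij_is_inj[THEN inv_o_cancel] by auto
  have sinv2: "\<And>x. s (finv s x) = x" using as(1) by (meson bij_inv_eq_iff)
  have ps: "perm_of g = s" "perm_of h = finv s" using as perm_of_eq h_def bi by auto
  have c1: "h \<circ> g = id"
  proof (rule HAut_trivial)
    show "h \<circ> g \<in> HAut" using HAut_comp hH assms by blast
    show "perm_of (h \<circ> g) = id" using HAut_comp[OF hH assms] ps sinv by simp
    show "(h \<circ> g) {} = {}" using as h_def by (simp add: translation_apply coordperm_apply)
  qed
  have c2: "g \<circ> h = id"
  proof (rule HAut_trivial)
    show "g \<circ> h \<in> HAut" using HAut_comp hH assms by blast
    show "perm_of (g \<circ> h) = id" using HAut_comp[OF assms hH] ps sinv by simp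
    show "(g \<circ> h) {} = {}" using as h_def
      by (simp add: translation_apply coordperm_apply image_comp sinv2)
  qed
  have "finv g = h" using inv_unique_comp c2 c1 by blast
  then show "finv g \<in> HAut" "g \<circ> finv g = id" "finv g \<circ> g = id" using hH c1 c2 by auto
  show "bij g" using o_bij c1 c2 by blast
qed




definition GS :: "('m set \<Rightarrow> 'm set) set \<Rightarrow> ('m set \<Rightarrow> 'm set) monoid" where
  "GS K = \<lparr>carrier = K, monoid.mult = (\<circ>), monoid.one = id\<rparr>"

definition grp :: "('m set \<Rightarrow> 'm set) set \<Rightarrow> bool" where
  "grp K \<longleftrightarrow> K \<subseteq> HAut \<and> id \<in> K \<and> (\<forall>g\<in>K. \<forall>h\<in>K. g \<circ> h \<in> K) \<and> (\<forall>g\<in>K. finv g \<in> K)"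

lemma HAutG_GS: "HAutG = GS HAut" "HAutG\<lparr>carrier := K\<rparr> = GS K"
  by (simp_all add: HAutG_def GS_def)

lemma GS_simps[simp]: "carrier (GS K) = K" "monoid.mult (GS K) = (\<circ>)" "monoid.one (GS K) = id"
  by (simp_all add: GS_def)

lemma id_HAut: "id \<in> HAut" using coordperm_HAut[of id] by simp

lemma grp_HAut: "grp HAut"
  unfolding grp_def using id_HAut HAut_comp HAut_inv by blast

lemma grp_group: assumes "grp K" shows "group (GS K)"
proof (rule groupI)
  show "\<exists>y\<in>carrier (GS K). y \<otimes>\<^bsub>GS K\<^esub> x = \<one>\<^bsub>GS K\<^esub>" if "x \<in> carrier (GS K)" for x
    using that assms HAut_inv unfolding grp_def by (metis GS_simps subsetD)
qed (use assms in \<open>auto simp: grp_def comp_assoc\<close>)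

lemma grp_inv: assumes "grp K" "g \<in> K" shows "m_inv (GS K) g = finv g"
proof -
  interpret group "GS K" by (rule grp_group[OF assms(1)])
  show ?thesis
    using assms HAut_inv[of g] inv_equality[where x=g and y="finv g"] unfolding grp_def by auto
qed

lemma grp_subgroup: assumes "grp K" "grp H" "H \<subseteq> K" shows "subgroup H (GS K)"
proof
  show "H \<subseteq> carrier (GS K)" using assms by simp
  show "x \<otimes>\<^bsub>GS K\<^esub> y \<in> H" if "x \<in> H" "y \<in> H" for x y using that assms(2) by (simp add: grp_def)
  show "\<one>\<^bsub>GS K\<^esub> \<in> H" using assms(2) by (simp add: grp_def)
  show "m_inv (GS K) x \<in> H" if "x \<in> H" for x
    using that assms grp_inv[of K x] by (auto simp: grp_def)
qed

lemma grp_normal: assumes "grp K" "grp N" "N \<subseteq> K" "\<forall>x\<in>K. \<forall>h\<in>N. x \<circ> h \<circ> finv x \<in> N"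
  shows "normal N (GS K)"
proof -
  interpret group "GS K" by (rule grp_group[OF assms(1)])
  show ?thesis
    unfolding normal_inv_iff using grp_subgroup[OF assms(1-3)] assms(4) grp_inv[OF assms(1)] by simp
qed

lemma grp_bij: "grp K \<Longrightarrow> g \<in> K \<Longrightarrow> bij g"
  using HAut_inv(4) by (auto simp: grp_def)

lemma grp_stab: assumes "grp K" shows "grp {g \<in> K. g ` D = D}"
  unfolding grp_def
proof (intro conjI ballI)
  show "{g \<in> K. g ` D = D} \<subseteq> HAut" using assms by (auto simp: grp_def)
  show "id \<in> {g \<in> K. g ` D = D}" using assms by (auto simp: grp_def)
  show "g \<circ> h \<in> {g \<in> K. g ` D = D}" if "g \<in> {g \<in> K. g ` D = D}" "h \<in> {g \<in> K. g ` D = D}" for g h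
  proof -
    have "(g \<circ> h) ` D = g ` (h ` D)" by (simp add: image_comp)
    then show ?thesis using that assms unfolding grp_def by auto
  qed
  show "finv g \<in> {g \<in> K. g ` D = D}" if "g \<in> {g \<in> K. g ` D = D}" for g
  proof -
    have "bij g" using that assms grp_bij by blast
    then have "finv g ` (g ` D) = D" by (simp add: bij_is_inj image_inv_f_f)
    then show ?thesis using that assms by (auto simp: grp_def)
  qed
qed

lemma grp_stab0: assumes "grp K" shows "grp (stab0 K)"
  unfolding grp_def stab0_def
proof (intro conjI ballI)
  show "{g \<in> K. g {} = {}} \<subseteq> HAut" using assms by (auto simp: grp_def)
  show "id \<in> {g \<in> K. g {} = {}}" using assms by (auto simp: grp_def)
  show "g \<circ> h \<in> {g \<in> K. g {} = {}}" if "g \<in> {g \<in> K. g {} = {}}" "h \<in> {g \<in> K. g {} = {}}" for g h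
    using that assms by (auto simp: grp_def)
  show "finv g \<in> {g \<in> K. g {} = {}}" if "g \<in> {g \<in> K. g {} = {}}" for g
  proof -
    have "bij g" using that assms grp_bij by blast
    then have "finv g (g {}) = {}" by (simp add: bij_is_inj)
    then show ?thesis using that assms by (auto simp: grp_def)
  qed
qed




lemma hamming_0: "hamming (a::'m::finite set) b = 0 \<longleftrightarrow> a = b"
  by (simp add: hamming_def symdiff_eq_empty)

lemma hamming_sym: "hamming a b = hamming b a"
  by (simp add: hamming_def symdiff_comm)

lemma hamming_empty[simp]: "hamming e {} = card e" "hamming {} e = card e"
  by (simp_all add: hamming_def)

lemma hamming_triangle: "hamming (a::'m::finite set) c \<le> hamming a b + hamming b c"
proof -
  have "symdiff a c \<subseteq> symdiff a b \<union> symdiff b c" by (auto simp: symdiff_iff)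
  then have "card (symdiff a c) \<le> card (symdiff a b \<union> symdiff b c)" by (simp add: card_mono)
  also have "\<dots> \<le> card (symdiff a b) + card (symdiff b c)" by (rule card_Un_le)
  finally show ?thesis by (simp add: hamming_def)
qed

lemma hamming_HAut: assumes "g \<in> HAut" shows "hamming (g a) (g b) = hamming a b"
proof -
  obtain c s where cs: "bij s" "g = translation c \<circ> coordperm s" using assms by (rule HAutE)
  have "symdiff (g a) (g b) = symdiff (s ` a) (s ` b)"
    using cs by (auto simp: translation_apply coordperm_apply symdiff_iff)
  also have "\<dots> = s ` symdiff a b" using cs by (simp add: image_symdiff bij_is_inj)
  moreover have "card (s ` symdiff a b) = card (symdiff a b)"
    using cs(1) by (metis bij_is_inj card_image inj_on_subset subset_UNIV)
  ultimately show ?thesis using cs by (simp add: hamming_def)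
qed

lemma mind: assumes "min_dist C \<ge> 5" "a \<in> C" "b \<in> C" "a \<noteq> b" shows "5 \<le> hamming (a::'m::finite set) b"
proof -
  have "{hamming a b | a b. a \<in> C \<and> b \<in> C \<and> a \<noteq> b} = (\<lambda>(a,b). hamming a b) ` {(a,b). a \<in> C \<and> b \<in> C \<and> a \<noteq> b}"
    by auto
  then have "finite {hamming a b | a b. a \<in> C \<and> b \<in> C \<and> a \<noteq> b}" by simp
  then have "min_dist C \<le> hamming a b" unfolding min_dist_def using assms by (intro Min_le) auto
  then show ?thesis using assms by simp
qed

lemma dist_set_eq: "{hamming \<alpha> c | c. c \<in> C} = (\<lambda>c. hamming \<alpha> c) ` C" by auto

lemma dist_code_le: "(c::'m::finite set) \<in> C \<Longrightarrow> dist_code \<alpha> C \<le> hamming \<alpha> c"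
  unfolding dist_code_def dist_set_eq by (intro Min_le) auto

lemma dist_code_ex: "(C::'m::finite set set) \<noteq> {} \<Longrightarrow> \<exists>c\<in>C. dist_code \<alpha> C = hamming \<alpha> c"
proof -
  assume "C \<noteq> {}"
  then have "Min ((\<lambda>c. hamming \<alpha> c) ` C) \<in> (\<lambda>c. hamming \<alpha> c) ` C" by (intro Min_in) auto
  then show ?thesis unfolding dist_code_def dist_set_eq by auto
qed

lemma dist_code_0: "(C::'m::finite set set) \<noteq> {} \<Longrightarrow> dist_code \<alpha> C = 0 \<longleftrightarrow> \<alpha> \<in> C"
proof
  assume ne: "C \<noteq> {}" "dist_code \<alpha> C = 0"
  then obtain c where "c \<in> C" "dist_code \<alpha> C = hamming \<alpha> c" using dist_code_ex by blast
  then show "\<alpha> \<in> C" using ne hamming_0 by metis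
next
  assume "\<alpha> \<in> C"
  then show "dist_code \<alpha> C = 0" using dist_code_le[of \<alpha> C \<alpha>] hamming_0[of \<alpha> \<alpha>] by simp
qed

lemma dist_code_HAut: assumes "g \<in> HAut" "g ` C = C" shows "dist_code (g \<alpha>) C = dist_code \<alpha> C"
proof -
  have "(\<lambda>c. hamming (g \<alpha>) c) ` C = (\<lambda>c. hamming (g \<alpha>) c) ` (g ` C)" using assms by simp
  also have "\<dots> = (\<lambda>c. hamming \<alpha> c) ` C" by (auto simp: image_comp hamming_HAut[OF assms(1)])
  finally show ?thesis unfolding dist_code_def dist_set_eq by simp
qed

lemma covering_radius_ge: "dist_code \<alpha> (C::'m::finite set set) \<le> covering_radius C"
proof -
  have "{dist_code \<alpha> C |\<alpha>. True} = range (\<lambda>\<alpha>. dist_code \<alpha> C)" by auto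
  then show ?thesis unfolding covering_radius_def by (intro Max_ge) auto
qed

lemma layer0: "(C::'m::finite set set) \<noteq> {} \<Longrightarrow> code_layer C 0 = C"
  using dist_code_0 by (auto simp: code_layer_def)

lemma key_layer:
  fixes C :: "'m::finite set set"
  assumes CT: "completely_transitive C" and zero: "{} \<in> C" and md: "min_dist C \<ge> 5"
    and i: "1 \<le> i" "i \<le> 2" and e: "card e = i" "card e' = i"
  shows "\<exists>g\<in>AutC C. g {} = {} \<and> g e = e'"
proof -
  have dist: "dist_code x C = i" if "card x = i" for x
  proof -
    obtain c0 where c0: "c0 \<in> C" "dist_code x C = hamming x c0" using dist_code_ex zero by blast
    have le: "dist_code x C \<le> i" using dist_code_le[OF zero, of x] that by simp
    have "c0 = {}"
    proof (rule ccontr)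
      assume "c0 \<noteq> {}"
      then have "5 \<le> hamming {} c0" using mind[OF md zero c0(1)] by simp
      moreover have "hamming {} c0 \<le> hamming {} x + hamming x c0" by (rule hamming_triangle)
      ultimately show False using le c0 that i by simp
    qed
    then show ?thesis using c0 that by simp
  qed
  have "i \<le> covering_radius C" using dist[OF e(1)] covering_radius_ge[of e C] by simp
  then have "transitive_on (AutC C) (code_layer C i)" using CT by (simp add: completely_transitive_def)
  moreover have "e \<in> code_layer C i" "e' \<in> code_layer C i" using dist e by (auto simp: code_layer_def)
  ultimately obtain g where g: "g \<in> AutC C" "g e = e'" unfolding transitive_on_def by blast
  have gH: "g \<in> HAut" "g ` C = C" using g by (auto simp: AutC_def setwise_stab_def)
  have g0: "g {} \<in> C" using gH zero by blast
  have "hamming (g {}) e' = i" using hamming_HAut[OF gH(1), of "{}" e] g e by simp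
  then have "hamming (g {}) {} \<le> 2 * i"
    using hamming_triangle[of "g {}" "{}" e'] e by simp
  then have "g {} = {}" using mind[OF md g0 zero] i by fastforce
  then show ?thesis using g by blast
qed




lemma grpD: assumes "grp G"
  shows "G \<subseteq> HAut" "id \<in> G" "g \<in> G \<Longrightarrow> h \<in> G \<Longrightarrow> g \<circ> h \<in> G" "g \<in> G \<Longrightarrow> finv g \<in> G"
  using assms by (auto simp: grp_def)

lemma orbit_count:
  fixes G :: "('m::finite set \<Rightarrow> 'm set) set"
  assumes G: "grp G" and inv: "\<forall>g\<in>G. g ` S = S" and tr: "transitive_on G S" and z: "{} \<in> S"
  shows "card G = card S * card (stab0 G)"
proof -
  define rep where "rep c = (SOME h. h \<in> G \<and> h {} = c)" for c
  have rep: "rep c \<in> G \<and> rep c {} = c" if "c \<in> S" for c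
  proof -
    have "\<exists>h. h \<in> G \<and> h {} = c" using tr z that unfolding transitive_on_def by blast
    then show ?thesis unfolding rep_def by (rule someI_ex)
  qed
  have bijG: "bij g" if "g \<in> G" for g using grp_bij[OF G that] .
  define psi :: "'m set \<times> ('m set \<Rightarrow> 'm set) \<Rightarrow> ('m set \<Rightarrow> 'm set)" where "psi = (\<lambda>(c, k). rep c \<circ> k)"
  have "bij_betw psi (S \<times> stab0 G) G"
  proof (rule bij_betw_imageI)
    show "inj_on psi (S \<times> stab0 G)"
    proof (rule inj_onI, clarify)
      fix c k c' k' assume a: "c \<in> S" "k \<in> stab0 G" "c' \<in> S" "k' \<in> stab0 G"
        and e: "psi (c, k) = psi (c', k')"
      have ee: "rep c \<circ> k = rep c' \<circ> k'" using e by (simp add: psi_def)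
      have "c = c'"
      proof -
        have "(rep c \<circ> k) {} = (rep c' \<circ> k') {}" using ee by simp
        then show ?thesis using a rep by (simp add: stab0_def)
      qed
      moreover have "k = k'"
      proof (rule ext)
        fix x
        have "rep c (k x) = rep c (k' x)" using ee \<open>c = c'\<close> by (metis comp_apply)
        then show "k x = k' x" using bijG[of "rep c"] rep a by (simp add: bij_is_inj inj_eq)
      qed
      ultimately show "c = c' \<and> k = k'" by simp
    qed
    show "psi ` (S \<times> stab0 G) = G"
    proof
      show "psi ` (S \<times> stab0 G) \<subseteq> G" using rep grpD[OF G] by (auto simp: psi_def stab0_def)
      show "G \<subseteq> psi ` (S \<times> stab0 G)"
      proof
        fix g assume g: "g \<in> G"
        define c where "c = g {}"
        have c: "c \<in> S" using inv g z c_def by blast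
        define k where "k = finv (rep c) \<circ> g"
        have kG: "k \<in> G" using k_def grpD[OF G] rep[OF c] g by blast
        have "finv (rep c) (rep c {}) = {}" using bijG[of "rep c"] rep[OF c] bij_is_inj inv_f_f by metis
        then have "k {} = {}" using k_def rep[OF c] c_def by simp
        then have ks: "k \<in> stab0 G" using kG by (simp add: stab0_def)
        have rc: "rep c \<circ> finv (rep c) = id" using bijG[of "rep c"] rep[OF c]
          bij_is_surj[THEN surj_iff[THEN iffD1]] by blast
        have rk: "rep c \<circ> k = g" using rc k_def by (simp add: comp_assoc[symmetric])
        have "psi (c, k) = g" using rk psi_def by simp
        then show "g \<in> psi ` (S \<times> stab0 G)" using c ks by force
      qed
    qed
  qed
  then have "card G = card (S \<times> stab0 G)" by (simp add: bij_betw_same_card)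
  then show ?thesis by (simp add: card_cartesian_product)
qed

lemma Btrans_perm: "g \<in> HAut \<Longrightarrow> g \<in> Btrans \<longleftrightarrow> perm_of g = id"
  using perm_of_HAut[of g] by (auto simp: Btrans_def)

lemma fiber_count:
  fixes G :: "('m::finite set \<Rightarrow> 'm set) set"
  assumes G: "grp G"
  shows "card G = card (induced_perm G) * card (G \<inter> Btrans)"
proof -
  define rep where "rep s = (SOME h. h \<in> G \<and> perm_of h = s)" for s
  have rep: "rep s \<in> G \<and> perm_of (rep s) = s" if "s \<in> induced_perm G" for s
  proof -
    have "\<exists>h. h \<in> G \<and> perm_of h = s" using that by (auto simp: induced_perm_def)
    then show ?thesis unfolding rep_def by (rule someI_ex)
  qed
  have bijG: "bij g" if "g \<in> G" for g using grp_bij[OF G that] .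
  have GH: "g \<in> G \<Longrightarrow> g \<in> HAut" for g using grpD(1)[OF G] by blast
  define psi :: "('m \<Rightarrow> 'm) \<times> ('m set \<Rightarrow> 'm set) \<Rightarrow> ('m set \<Rightarrow> 'm set)" where "psi = (\<lambda>(s, k). rep s \<circ> k)"
  have "bij_betw psi (induced_perm G \<times> (G \<inter> Btrans)) G"
  proof (rule bij_betw_imageI)
    show "inj_on psi (induced_perm G \<times> (G \<inter> Btrans))"
    proof (rule inj_onI, clarify)
      fix s k s' k' assume a: "s \<in> induced_perm G" "k \<in> G" "k \<in> Btrans"
         "s' \<in> induced_perm G" "k' \<in> G" "k' \<in> Btrans"
        and e: "psi (s, k) = psi (s', k')"
      have ee: "rep s \<circ> k = rep s' \<circ> k'" using e by (simp add: psi_def)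
      have "s = s'"
      proof -
        have "perm_of (rep s \<circ> k) = perm_of (rep s' \<circ> k')" using ee by simp
        moreover have "perm_of k = id" "perm_of k' = id" using Btrans_perm GH a by auto
        ultimately show ?thesis using a rep HAut_comp(2)[OF GH GH] by simp
      qed
      moreover have "k = k'"
      proof (rule ext)
        fix x
        have "rep s (k x) = rep s (k' x)" using ee \<open>s = s'\<close> by (metis comp_apply)
        then show "k x = k' x" using bijG[of "rep s"] rep a by (simp add: bij_is_inj inj_eq)
      qed
      ultimately show "s = s' \<and> k = k'" by simp
    qed
    show "psi ` (induced_perm G \<times> (G \<inter> Btrans)) = G"
    proof
      show "psi ` (induced_perm G \<times> (G \<inter> Btrans)) \<subseteq> G" using rep grpD[OF G] by (auto simp: psi_def)
      show "G \<subseteq> psi ` (induced_perm G \<times> (G \<inter> Btrans))"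
      proof
        fix g assume g: "g \<in> G"
        define s where "s = perm_of g"
        have s: "s \<in> induced_perm G" using g s_def by (simp add: induced_perm_def)
        define k where "k = finv (rep s) \<circ> g"
        have kG: "k \<in> G" using k_def grpD[OF G] rep[OF s] g by blast
        have "rep s \<circ> finv (rep s) = id" using bijG[of "rep s"] rep[OF s]
          bij_is_surj[THEN surj_iff[THEN iffD1]] by blast
        then have rk: "rep s \<circ> k = g" using k_def by (simp add: comp_assoc[symmetric])
        have "s \<circ> perm_of k = s \<circ> id"
          using HAut_comp(2)[OF GH GH, of "rep s" k] rk rep[OF s] kG s_def by simp
        moreover have "bij s" using s_def perm_of_HAut(1) GH g by blast
        ultimately have "perm_of k = id" by (metis bij_is_inj fun.inj_map_strong inj_eq)
        then have "k \<in> G \<inter> Btrans" using kG Btrans_perm GH by blast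
        moreover have "psi (s, k) = g" using rk psi_def by simp
        ultimately show "g \<in> psi ` (induced_perm G \<times> (G \<inter> Btrans))" using s by force
      qed
    qed
  qed
  then have "card G = card (induced_perm G \<times> (G \<inter> Btrans))" by (simp add: bij_betw_same_card)
  then show ?thesis by (simp add: card_cartesian_product)
qed

lemma conj_translation: assumes "g \<in> HAut"
  shows "g \<circ> translation b \<circ> finv g = translation (perm_of g ` b)"
proof -
  obtain a s where as: "bij s" "g = translation a \<circ> coordperm s" using assms by (rule HAutE)
  have ps: "perm_of g = s" using as perm_of_eq by blast
  have "g \<circ> translation b = translation (s ` b) \<circ> g"
    using as by (auto simp: fun_eq_iff translation_apply coordperm_apply image_symdiff bij_is_inj symdiff_iff)
  then have "g \<circ> translation b \<circ> finv g = translation (s ` b) \<circ> (g \<circ> finv g)" by (simp add: comp_assoc)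
  then show ?thesis using HAut_inv(2)[OF assms] ps by simp
qed




lemma translation_finv[simp]: "finv (translation b) = translation b"
  using inv_unique_comp[OF translation_invol translation_invol] .

lemma grp_transl: assumes "linear_code D" shows "grp (transl_group D)"
  unfolding grp_def transl_group_def
proof (intro conjI ballI)
  show "translation ` D \<subseteq> HAut" by auto
  show "id \<in> translation ` D" using assms translation_empty unfolding linear_code_def by (metis image_eqI)
  show "g \<circ> h \<in> translation ` D" if "g \<in> translation ` D" "h \<in> translation ` D" for g h
    using that assms unfolding linear_code_def by (auto simp: translation_comp)
  show "finv g \<in> translation ` D" if "g \<in> translation ` D" for g using that by auto
qed

lemma linear_transl_image: assumes "linear_code D" "b \<in> D" shows "translation b ` D = D"
proof
  show "translation b ` D \<subseteq> D" using assms by (auto simp: linear_code_def translation_apply)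
  show "D \<subseteq> translation b ` D"
  proof
    fix x assume "x \<in> D"
    then have "symdiff x b \<in> D" "translation b (symdiff x b) = x"
      using assms by (auto simp: linear_code_def translation_apply symdiff_assoc)
    then show "x \<in> translation b ` D" by (metis image_eqI)
  qed
qed




lemma GS_upd: "(GS K)\<lparr>carrier := K'\<rparr> = GS K'" by (simp add: GS_def)

theorem proposition2p7:
  fixes C Cmax :: "('m::finite) set set"
    and X Xmax :: "('m set \<Rightarrow> 'm set) set"
  assumes CT: "completely_transitive C"
    and zero: "{} \<in> C"
    and mindist: "min_dist C \<ge> 5"
    and X_def: "X = AutC C"
    and Cmax: "is_max_linear_subcode C Cmax"
    and Xmax_def: "Xmax = setwise_stab X Cmax"
    and dim_lo: "2 \<le> code_dim Cmax"
    and dim_hi: "code_dim Cmax \<le> card (UNIV :: 'm set) - 2"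
  shows "internal_semidirect Xmax (transl_group Cmax) (stab0 X)
    \<and> (neighbour_transitive Xmax Cmax 2 \<and> min_dist Cmax \<ge> 5)
    \<and> (kernel_on_coords X = kernel_on_coords Xmax \<and> kernel_on_coords X = X \<inter> Btrans
       \<and> X \<inter> Btrans = Xmax \<inter> Btrans \<and> Xmax \<inter> Btrans = transl_group Cmax)
    \<and> F2_module Cmax (stab0 X)
    \<and> (real (card C) / real (card Cmax) = real (card X) / real (card Xmax)
       \<and> real (card X) / real (card Xmax)
           = real (card (induced_perm X)) / real (card (induced_perm (stab0 X))))"
proof -
  define D where "D = Cmax"
  have Xeq: "X = {g \<in> HAut. g ` C = C}" using X_def by (simp add: AutC_def setwise_stab_def)
  have grpX: "grp X" using Xeq grp_stab[OF grp_HAut] by simp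
  have XH: "g \<in> X \<Longrightarrow> g \<in> HAut" for g using Xeq by auto
  have lin: "linear_code D" and DC: "D \<subseteq> C" and TD: "transl_group D \<subseteq> X"
    and maxi: "\<And>D'. linear_code D' \<Longrightarrow> D' \<subseteq> C \<Longrightarrow> transl_group D' \<subseteq> X \<Longrightarrow> D' \<subseteq> D"
    using Cmax X_def by (auto simp: is_max_linear_subcode_def D_def)
  have D0: "{} \<in> D" using lin by (simp add: linear_code_def)
  have grpT: "grp (transl_group D)" using grp_transl[OF lin] .
  have XB: "X \<inter> Btrans = transl_group D"
  proof
    show "transl_group D \<subseteq> X \<inter> Btrans" using TD by (auto simp: transl_group_def Btrans_def)
    define D' where "D' = {b. translation b \<in> X}"
    have "linear_code D'"
      unfolding linear_code_def D'_def
      using grpD(2)[OF grpX] grpD(3)[OF grpX] by (auto simp flip: translation_comp)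
    moreover have "D' \<subseteq> C"
    proof
      fix b assume "b \<in> D'"
      then have "translation b ` C = C" using Xeq D'_def by auto
      then have "translation b {} \<in> C" using zero by blast
      then show "b \<in> C" by (simp add: translation_apply)
    qed
    moreover have "transl_group D' \<subseteq> X" by (auto simp: transl_group_def D'_def)
    ultimately have "D' \<subseteq> D" using maxi by blast
    then show "X \<inter> Btrans \<subseteq> transl_group D" by (auto simp: Btrans_def transl_group_def D'_def)
  qed
  have X0D: "g ` D = D" if g: "g \<in> stab0 X" for g
  proof -
    have gX: "g \<in> X" "g {} = {}" using g by (auto simp: stab0_def)
    have gH: "g \<in> HAut" using XH gX by blast
    have geq: "g = coordperm (perm_of g)" using perm_of_HAut(2)[OF gH] gX by simp
    have "g ` D \<subseteq> D"
    proof
      fix y assume "y \<in> g ` D"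
      then obtain b where b: "b \<in> D" "y = g b" by blast
      have "g \<circ> translation b \<circ> finv g \<in> X"
        using grpD[OF grpX] gX TD b by (auto simp: transl_group_def)
      then have "translation (perm_of g ` b) \<in> transl_group D"
        using conj_translation[OF gH] XB by (auto simp: Btrans_def)
      then have "perm_of g ` b \<in> D" by (auto simp: transl_group_def dest: translation_inj)
      then show "y \<in> D" using b geq by (metis coordperm_apply)
    qed
    moreover have "inj_on g D" using grp_bij[OF grpX gX(1)] bij_is_inj inj_on_subset by blast
    ultimately show ?thesis by (intro endo_inj_surj) auto
  qed
  have Xmax_eq: "Xmax = {g \<in> X. g ` D = D}" using Xmax_def D_def by (simp add: setwise_stab_def)
  have grpXm: "grp Xmax" using Xmax_eq grp_stab[OF grpX] by simp
  have X0Xm: "stab0 X \<subseteq> Xmax" using X0D Xmax_eq by (auto simp: stab0_def)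
  have TXm: "transl_group D \<subseteq> Xmax"
    using TD Xmax_eq linear_transl_image[OF lin] by (auto simp: transl_group_def)
  have XmX: "Xmax \<subseteq> X" using Xmax_eq by auto
  have XmB: "Xmax \<inter> Btrans = transl_group D" using XB XmX TXm by (auto simp: transl_group_def Btrans_def)
  have kerH: "kernel_on_coords Y = Y \<inter> Btrans" if "Y \<subseteq> HAut" for Y
    using that Btrans_perm by (auto simp: kernel_on_coords_def)
  have XmH: "Xmax \<subseteq> HAut" using grpD(1)[OF grpXm] .
  have part1: "internal_semidirect Xmax (transl_group D) (stab0 X)"
    unfolding internal_semidirect_def HAutG_GS(1) GS_upd
  proof (intro conjI)
    show "subgroup Xmax (GS HAut)" using grp_subgroup[OF grp_HAut grpXm XmH] .
    show "transl_group D \<lhd> GS Xmax"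
    proof (rule grp_normal[OF grpXm grpT TXm], intro ballI)
      fix x h assume x: "x \<in> Xmax" and h: "h \<in> transl_group D"
      then obtain b where b: "h = translation b" by (auto simp: transl_group_def)
      have xH: "x \<in> HAut" using x XmH by blast
      have in1: "x \<circ> h \<circ> finv x \<in> Xmax"
        using grpD(3)[OF grpXm] grpD(4)[OF grpXm] x h TXm by (meson subsetD)
      have "x \<circ> h \<circ> finv x = translation (perm_of x ` b)" using conj_translation[OF xH] b by simp
      then have "x \<circ> h \<circ> finv x \<in> Btrans" by (simp add: Btrans_def)
      then show "x \<circ> h \<circ> finv x \<in> transl_group D" using XmB in1 by blast
    qed
    show "subgroup (stab0 X) (GS Xmax)" using grp_subgroup[OF grpXm grp_stab0[OF grpX] X0Xm] .
    show "transl_group D \<inter> stab0 X = {id}"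
    proof
      show "transl_group D \<inter> stab0 X \<subseteq> {id}"
      proof
        fix f assume f: "f \<in> transl_group D \<inter> stab0 X"
        then obtain b where b: "f = translation b" unfolding transl_group_def by blast
        have "f {} = {}" using f unfolding stab0_def by blast
        then have "b = {}" using b by (simp add: translation_apply)
        then show "f \<in> {id}" using b by simp
      qed
      show "{id} \<subseteq> transl_group D \<inter> stab0 X"
        using grpD(2)[OF grpT] grpD(2)[OF grp_stab0[OF grpX]] by auto
    qed
    show "Xmax = {n \<circ> h |n h. n \<in> transl_group D \<and> h \<in> stab0 X}"
    proof
      show "{n \<circ> h |n h. n \<in> transl_group D \<and> h \<in> stab0 X} \<subseteq> Xmax"
      proof clarify
        fix n h assume "n \<in> transl_group D" "h \<in> stab0 X"
        then show "n \<circ> h \<in> Xmax" using grpD(3)[OF grpXm] TXm X0Xm by (meson subsetD)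
      qed
      show "Xmax \<subseteq> {n \<circ> h |n h. n \<in> transl_group D \<and> h \<in> stab0 X}"
      proof
        fix g assume g: "g \<in> Xmax"
        define b where "b = g {}"
        have bD: "b \<in> D" using g Xmax_eq D0 b_def by blast
        have tb: "translation b \<in> Xmax" using TXm bD by (auto simp: transl_group_def)
        have hX: "translation b \<circ> g \<in> X" using grpD(3)[OF grpXm tb g] XmX by blast
        have "(translation b \<circ> g) {} = {}" using b_def by (simp add: translation_apply)
        then have "translation b \<circ> g \<in> stab0 X" using hX by (simp add: stab0_def)
        moreover have "g = translation b \<circ> (translation b \<circ> g)" by (simp add: comp_assoc[symmetric])
        moreover have "translation b \<in> transl_group D" using bD by (simp add: transl_group_def)
        ultimately have "\<exists>n h. g = n \<circ> h \<and> n \<in> transl_group D \<and> h \<in> stab0 X"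
          by (intro exI[of _ "translation b"] exI[of _ "translation b \<circ> g"]) simp
        then show "g \<in> {n \<circ> h |n h. n \<in> transl_group D \<and> h \<in> stab0 X}" by simp
      qed
    qed
  qed
  have trXm: "transitive_on Xmax D"
    unfolding transitive_on_def
  proof (intro ballI)
    fix a b assume ab: "a \<in> D" "b \<in> D"
    have "translation (symdiff a b) \<in> Xmax" using TXm ab lin
      by (auto simp: transl_group_def linear_code_def)
    moreover have "translation (symdiff a b) a = b"
      by (simp add: translation_apply symdiff_assoc[symmetric])
    ultimately show "\<exists>g\<in>Xmax. g a = b" by blast
  qed
  have Dne: "D \<noteq> {}" using D0 by blast
  have layers: "transitive_on Xmax (code_layer D i)" if i: "1 \<le> i" "i \<le> 2" for i
    unfolding transitive_on_def
  proof (intro ballI)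
    fix a b assume ab: "a \<in> code_layer D i" "b \<in> code_layer D i"
    obtain c where c: "c \<in> D" "dist_code a D = hamming a c" using dist_code_ex[OF Dne] by blast
    obtain c' where c': "c' \<in> D" "dist_code b D = hamming b c'" using dist_code_ex[OF Dne] by blast
    define e where "e = symdiff a c"
    define e' where "e' = symdiff b c'"
    have ce: "card e = i" "card e' = i" using ab c c' e_def e'_def
      by (auto simp: code_layer_def hamming_def)
    obtain g where g: "g \<in> AutC C" "g {} = {}" "g e = e'"
      using key_layer[OF CT zero mindist i ce] by blast
    have gX: "g \<in> Xmax" using g X0Xm X_def by (auto simp: stab0_def)
    have tc: "translation c \<in> Xmax" "translation c' \<in> Xmax" using TXm c c'
      by (auto simp: transl_group_def)
    have "translation c' \<circ> g \<circ> translation c \<in> Xmax" using grpD(3)[OF grpXm] gX tc by blast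
    moreover have "(translation c' \<circ> g \<circ> translation c) a = b"
      using g e_def e'_def by (simp add: translation_apply symdiff_assoc)
    ultimately show "\<exists>g\<in>Xmax. g a = b" by blast
  qed
  have part2a: "neighbour_transitive Xmax D 2"
    unfolding neighbour_transitive_def
  proof (intro conjI ballI)
    show "subgroup Xmax HAutG" unfolding HAutG_GS(1) using grp_subgroup[OF grp_HAut grpXm XmH] .
    show "Xmax \<subseteq> AutC D" using XmH Xmax_eq by (auto simp: AutC_def setwise_stab_def)
    show "transitive_on Xmax D" by (rule trXm)
    show "transitive_on Xmax (code_layer D i)" if "i \<in> {1..2}" for i
      using layers that by simp
  qed
  obtain a b where ab: "a \<in> D" "b \<in> D" "a \<noteq> b"
  proof (rule ccontr)
    assume "\<not> thesis"
    then have "\<forall>a\<in>D. \<forall>b\<in>D. a = b" using that by blast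
    then have "D = {{}}" using D0 by blast
    then have "code_dim D = (THE k. (1::nat) = 2 ^ k)" by (simp add: code_dim_def)
    also have "\<dots> = 0"
    proof (rule the_equality)
      show "(1::nat) = 2 ^ 0" by simp
      show "k = 0" if "(1::nat) = 2 ^ k" for k using that by (metis nat_power_eq_Suc_0_iff One_nat_def numeral_eq_one_iff semiring_norm(85))
    qed
    finally show False using dim_lo D_def by simp
  qed
  have part2b: "min_dist D \<ge> 5"
  proof -
    let ?S = "{hamming a b | a b. a \<in> D \<and> b \<in> D \<and> a \<noteq> b}"
    have "?S = (\<lambda>(a,b). hamming a b) ` {(a,b). a \<in> D \<and> b \<in> D \<and> a \<noteq> b}" by auto
    then have "finite ?S" by simp
    moreover have "?S \<noteq> {}" using ab by blast
    ultimately have "Min ?S \<in> ?S" by (rule Min_in)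
    then obtain x y where "x \<in> D" "y \<in> D" "x \<noteq> y" "min_dist D = hamming x y"
      unfolding min_dist_def by blast
    then show ?thesis using mind[OF mindist] DC by (metis subsetD)
  qed
  have part3: "kernel_on_coords X = kernel_on_coords Xmax \<and> kernel_on_coords X = X \<inter> Btrans
       \<and> X \<inter> Btrans = Xmax \<inter> Btrans \<and> Xmax \<inter> Btrans = transl_group D"
  proof -
    have k1: "kernel_on_coords X = X \<inter> Btrans" using kerH grpD(1)[OF grpX] by blast
    have k2: "kernel_on_coords Xmax = Xmax \<inter> Btrans" using kerH XmH by blast
    show ?thesis by (simp only: k1 k2 XB XmB simp_thms)
  qed
  have part4: "F2_module D (stab0 X)"
    unfolding F2_module_def
  proof (intro conjI ballI lin)
    fix g assume g: "g \<in> stab0 X"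
    show "g ` D = D" using X0D g .
  next
    fix g a b assume g: "g \<in> stab0 X" and ab: "a \<in> D" "b \<in> D"
    have gH: "g \<in> HAut" "g {} = {}" using g XH by (auto simp: stab0_def)
    have geq: "g = coordperm (perm_of g)" using perm_of_HAut(2)[OF gH(1)] gH by simp
    have "inj (perm_of g)" using perm_of_HAut(1)[OF gH(1)] bij_is_inj by blast
    then have "perm_of g ` symdiff a b = symdiff (perm_of g ` a) (perm_of g ` b)" by (rule image_symdiff)
    then show "g (symdiff a b) = symdiff (g a) (g b)" using geq by (metis coordperm_apply)
  qed
  have trX: "transitive_on X C"
  proof -
    have "transitive_on (AutC C) (code_layer C 0)" using CT by (simp add: completely_transitive_def)
    moreover have "code_layer C 0 = C" using layer0[of C] zero by blast
    ultimately show ?thesis using X_def by simp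
  qed
  have c1: "card X = card C * card (stab0 X)"
    by (rule orbit_count[OF grpX _ trX zero]) (use Xeq in auto)
  have st: "stab0 Xmax = stab0 X" using X0Xm XmX by (auto simp: stab0_def)
  have c2: "card Xmax = card D * card (stab0 X)"
    using orbit_count[OF grpXm _ trXm D0] Xmax_eq st by auto
  have "card (transl_group D) = card D"
    unfolding transl_group_def by (rule card_image) (meson inj_onI translation_inj)
  then have c3: "card X = card (induced_perm X) * card D" using fiber_count[OF grpX] XB by simp
  have c4: "card (induced_perm (stab0 X)) = card (stab0 X)"
    unfolding induced_perm_def
  proof (rule card_image, rule inj_onI)
    fix g h assume gh: "g \<in> stab0 X" "h \<in> stab0 X" "perm_of g = perm_of h"
    have "g = coordperm (perm_of g)" using perm_of_HAut(2)[of g] gh XH by (auto simp: stab0_def)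
    moreover have "h = coordperm (perm_of h)" using perm_of_HAut(2)[of h] gh XH by (auto simp: stab0_def)
    ultimately show "g = h" using gh by simp
  qed
  have p1: "card (stab0 X) > 0" using grpD(2)[OF grp_stab0[OF grpX]] by (auto simp: card_gt_0_iff)
  have p2: "card D > 0" using D0 by (auto simp: card_gt_0_iff)
  have r1: "real (card (stab0 X)) > 0" using p1 by (simp only: of_nat_0_less_iff)
  have r2: "real (card D) > 0" using p2 by (simp only: of_nat_0_less_iff)
  have part5: "real (card C) / real (card D) = real (card X) / real (card Xmax)
       \<and> real (card X) / real (card Xmax)
           = real (card (induced_perm X)) / real (card (induced_perm (stab0 X)))"
  proof
    show "real (card C) / real (card D) = real (card X) / real (card Xmax)"
    proof -
      have "real (card X) / real (card Xmax)
          = (real (card C) * real (card (stab0 X))) / (real (card D) * real (card (stab0 X)))"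
        using c1 c2 by simp
      also have "\<dots> = real (card C) / real (card D)"
        by (rule nonzero_mult_divide_mult_cancel_right) (use r1 in linarith)
      finally show ?thesis by simp
    qed
    show "real (card X) / real (card Xmax) = real (card (induced_perm X)) / real (card (induced_perm (stab0 X)))"
    proof -
      have "real (card X) / real (card Xmax)
          = (real (card (induced_perm X)) * real (card D)) / (real (card (stab0 X)) * real (card D))"
        using c3 c2 by (simp add: mult.commute)
      also have "\<dots> = real (card (induced_perm X)) / real (card (stab0 X))"
        by (rule nonzero_mult_divide_mult_cancel_right) (use r2 in linarith)
      finally show ?thesis using c4 by simp
    qed
  qed
  show ?thesis unfolding D_def[symmetric]
    by (rule conjI[OF part1 conjI[OF conjI[OF part2a part2b] conjI[OF part3 conjI[OF part4 part5]]]])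
qed


end
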